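(* Let $\mathbb{M}$ be $(1+3)$-dimensional Minkowski spacetime and $\overline{\mathcal{P}}_+^\uparrow=\mathbb{R}^4\rtimes SL(2,\mathbb{C})$ the double cover of the proper orthochronous Poincaré group, with elements $(a,A)$, and let $\Lambda:SL(2,\mathbb{C})\to SO^+(1,3)$ be the covering homomorphism. Let $\mathcal{H}$ be a Hilbert space, $\mathcal{D}\subset\mathcal{H}$ dense, $U$ a unitary representation of $\overline{\mathcal{P}}_+^\uparrow$ on $\mathcal{H}$, and $S:SL(2,\mathbb{C})\to GL(\mathbb{C}^n)$ a multiplicity-free finite-dimensional representation with no trivial sub-representations. Let $\hat\psi=\{\hat\psi_\alpha:\mathbb{M}\to\mathcal{L}(\mathcal{D},\mathcal{H})\}_{\alpha=1}^n$. Suppose (1) $U(a,A)\mathcal{D}\subset\mathcal{D}$ and $U(a,A)^\dagger\mathcal{D}\subset\mathcal{D}$ for all $(a,A)\in\overline{\mathcal{P}}_+^\uparrow$; (2) $\hat\psi_\alpha(x)\mathcal{D}\subset\mathcal{D}$ and $\hat\psi_\alpha(x)^\dagger\mathcal{D}\subset\mathcal{D}$ for all $x\in\mathbb{M}$ and all $\alpha$; (3) for all $(a,A)\in\overline{\mathcal{P}}_+^\uparrow$, $x\in\mathbb{M}$, $\alpha\in\{1,\dots,n\}$, on $\mathcal{D}$: $U(a,A)\hat\psi_\alpha(x)U(a,A)^\dagger=\sum_{\beta=1}^nS[A^{-1}]_{\alpha\beta}\hat\psi_\beta(\Lambda(A)x+a)$; (4) there exists a nonzero vector $\ket\Omega\in\mathcal{D}$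 with $U(a,A)\ket\Omega=\ket\Omega$ for all $(a,A)\in\overline{\mathcal{P}}_+^\uparrow$. Then $\hat\psi_\alpha(x)\ket\Omega=\hat\psi_\alpha(x)^\dagger\ket\Omega=0$ for all $x\in\mathbb{M}$ and all $\alpha\in\{1,\dots,n\}$.
   Context: $\mathcal{L}(\mathcal{D},\mathcal{H})$ denotes the linear maps from $\mathcal{D}$ into $\mathcal{H}$. No continuity of $U$ is assumed. A finite-dimensional representation is multiplicity-free if, in its decomposition into irreducible sub-representations, no irreducible representation occurs more than once; "no trivial sub-representations" means the one-dimensional trivial representation does not occur. *)

theory Defs
  imports "HOL-Analysis.Analysis" "HOL-Library.Numeral_Type"
begin

text \<open>Inner product is conjugate-linear in the first and linear in the second argument
  (physics convention). Norm derived from the inner product.\<close>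

definition hnorm :: "('h \<Rightarrow> 'h \<Rightarrow> complex) \<Rightarrow> 'h \<Rightarrow> real" where
  "hnorm ip x = sqrt (Re (ip x x))"

definition complex_hilbert_space ::
  "(complex \<Rightarrow> 'h::ab_group_add \<Rightarrow> 'h) \<Rightarrow> ('h \<Rightarrow> 'h \<Rightarrow> complex) \<Rightarrow> bool" where
  "complex_hilbert_space sc ip \<longleftrightarrow>
     vector_space sc \<and>
     (\<forall>x y z. ip x (y + z) = ip x y + ip x z) \<and>
     (\<forall>x y c. ip x (sc c y) = c * ip x y) \<and>
     (\<forall>x y. ip y x = cnj (ip x y)) \<and>
     (\<forall>x. Im (ip x x) = 0 \<and> Re (ip x x) \<ge> 0) \<and>
     (\<forall>x. ip x x = 0 \<longrightarrow> x = 0) \<and>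
     (\<forall>f :: nat \<Rightarrow> 'h.
        (\<forall>e>0. \<exists>N. \<forall>m n. N \<le> m \<and> N \<le> n \<longrightarrow> hnorm ip (f m - f n) < e) \<longrightarrow>
        (\<exists>l. (\<lambda>n. hnorm ip (f n - l)) \<longlonglongrightarrow> 0))"

definition is_subspace :: "(complex \<Rightarrow> 'h::ab_group_add \<Rightarrow> 'h) \<Rightarrow> 'h set \<Rightarrow> bool" where
  "is_subspace sc D \<longleftrightarrow> 0 \<in> D \<and> (\<forall>x\<in>D. \<forall>y\<in>D. x + y \<in> D) \<and> (\<forall>c. \<forall>x\<in>D. sc c x \<in> D)"

definition dense_in :: "('h::ab_group_add \<Rightarrow> 'h \<Rightarrow> complex) \<Rightarrow> 'h set \<Rightarrow> bool" where
  "dense_in ip D \<longleftrightarrow> (\<forall>x. \<forall>e>0. \<exists>d\<in>D. hnorm ip (x - d) < e)"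

text \<open>A linear map defined on the subspace D (values outside D are irrelevant).\<close>
definition linear_on :: "(complex \<Rightarrow> 'h::ab_group_add \<Rightarrow> 'h) \<Rightarrow> 'h set \<Rightarrow> ('h \<Rightarrow> 'h) \<Rightarrow> bool" where
  "linear_on sc D T \<longleftrightarrow> (\<forall>x\<in>D. \<forall>y\<in>D. T (x + y) = T x + T y) \<and> (\<forall>c. \<forall>x\<in>D. T (sc c x) = sc c (T x))"

definition adj_dom :: "('h \<Rightarrow> 'h \<Rightarrow> complex) \<Rightarrow> 'h set \<Rightarrow> ('h \<Rightarrow> 'h) \<Rightarrow> 'h set" where
  "adj_dom ip D T = {v. \<exists>u. \<forall>w\<in>D. ip u w = ip v (T w)}"

definition adj :: "('h \<Rightarrow> 'h \<Rightarrow> complex) \<Rightarrow> 'h set \<Rightarrow> ('h \<Rightarrow> 'h) \<Rightarrow> 'h \<Rightarrow> 'h" where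
  "adj ip D T v = (THE u. \<forall>w\<in>D. ip u w = ip v (T w))"

definition unitary_op :: "(complex \<Rightarrow> 'h::ab_group_add \<Rightarrow> 'h) \<Rightarrow> ('h \<Rightarrow> 'h \<Rightarrow> complex) \<Rightarrow> ('h \<Rightarrow> 'h) \<Rightarrow> bool" where
  "unitary_op sc ip T \<longleftrightarrow> linear_on sc UNIV T \<and> (\<forall>x y. ip (T x) (T y) = ip x y) \<and> surj T"

definition SL2C :: "(complex^2^2) set" where
  "SL2C = {A. det A = 1}"

definition cadj :: "complex^2^2 \<Rightarrow> complex^2^2" where
  "cadj A = (\<chi> i j. cnj (A $ j $ i))"

text \<open>Minkowski vector x = (x0,x1,x2,x3) as Hermitian matrix x0 I + x1 s1 + x2 s2 + x3 s3.\<close>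
definition herm :: "real^4 \<Rightarrow> complex^2^2" where
  "herm x = (\<chi> i j.
     if i = 0 \<and> j = 0 then complex_of_real (x$0 + x$3)
     else if i = 0 \<and> j = 1 then Complex (x$1) (- (x$2))
     else if i = 1 \<and> j = 0 then Complex (x$1) (x$2)
     else complex_of_real (x$0 - x$3))"

text \<open>Covering homomorphism: Lambda(A) x = herm^-1 (A herm(x) A^*).\<close>
definition lorentz :: "complex^2^2 \<Rightarrow> real^4 \<Rightarrow> real^4" where
  "lorentz A x = (let M = A ** herm x ** cadj A in
     (\<chi> k. if k = 0 then Re (M$0$0 + M$1$1) / 2
           else if k = 1 then Re (M$1$0)
           else if k = 2 then Im (M$1$0)
           else Re (M$0$0 - M$1$1) / 2))"

definition poincare :: "((real^4) \<times> (complex^2^2)) set" where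
  "poincare = {(a, A). A \<in> SL2C}"

definition pmult :: "(real^4) \<times> (complex^2^2) \<Rightarrow> (real^4) \<times> (complex^2^2) \<Rightarrow> (real^4) \<times> (complex^2^2)" where
  "pmult g h = (fst g + lorentz (snd g) (fst h), snd g ** snd h)"

definition unitary_rep_poincare ::
  "(complex \<Rightarrow> 'h::ab_group_add \<Rightarrow> 'h) \<Rightarrow> ('h \<Rightarrow> 'h \<Rightarrow> complex) \<Rightarrow> ((real^4) \<times> (complex^2^2) \<Rightarrow> 'h \<Rightarrow> 'h) \<Rightarrow> bool" where
  "unitary_rep_poincare sc ip U \<longleftrightarrow>
     (\<forall>g\<in>poincare. unitary_op sc ip (U g)) \<and>
     U (0, mat 1) = id \<and>
     (\<forall>g\<in>poincare. \<forall>h\<in>poincare. U (pmult g h) = U g \<circ> U h)"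

definition rep_SL2C :: "(complex^2^2 \<Rightarrow> complex^'n^'n) \<Rightarrow> bool" where
  "rep_SL2C S \<longleftrightarrow> S (mat 1) = mat 1 \<and> (\<forall>A\<in>SL2C. \<forall>B\<in>SL2C. S (A ** B) = S A ** S B)"

definition csubspace :: "(complex^'n) set \<Rightarrow> bool" where
  "csubspace V \<longleftrightarrow> 0 \<in> V \<and> (\<forall>x\<in>V. \<forall>y\<in>V. x + y \<in> V) \<and> (\<forall>c. \<forall>x\<in>V. c *s x \<in> V)"

definition invariant_sub :: "(complex^2^2 \<Rightarrow> complex^'n^'n) \<Rightarrow> (complex^'n) set \<Rightarrow> bool" where
  "invariant_sub S V \<longleftrightarrow> csubspace V \<and> (\<forall>A\<in>SL2C. \<forall>v\<in>V. S A *v v \<in> V)"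

definition irreducible_sub :: "(complex^2^2 \<Rightarrow> complex^'n^'n) \<Rightarrow> (complex^'n) set \<Rightarrow> bool" where
  "irreducible_sub S V \<longleftrightarrow> invariant_sub S V \<and> V \<noteq> {0} \<and>
     (\<forall>W. invariant_sub S W \<and> W \<subseteq> V \<longrightarrow> W = {0} \<or> W = V)"

definition iso_sub :: "(complex^2^2 \<Rightarrow> complex^'n^'n) \<Rightarrow> (complex^'n) set \<Rightarrow> (complex^'n) set \<Rightarrow> bool" where
  "iso_sub S V W \<longleftrightarrow> (\<exists>T. bij_betw T V W \<and>
     (\<forall>x\<in>V. \<forall>y\<in>V. T (x + y) = T x + T y) \<and> (\<forall>c. \<forall>x\<in>V. T (c *s x) = c *s T x) \<and>
     (\<forall>A\<in>SL2C. \<forall>v\<in>V. T (S A *v v) = S A *v T v))"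

definition multiplicity_free :: "(complex^2^2 \<Rightarrow> complex^'n^'n) \<Rightarrow> bool" where
  "multiplicity_free S \<longleftrightarrow> (\<exists>(V :: nat \<Rightarrow> (complex^'n) set) k.
     (\<forall>i<k. irreducible_sub S (V i)) \<and>
     (\<forall>x. \<exists>v. (\<forall>i<k. v i \<in> V i) \<and> x = (\<Sum>i<k. v i)) \<and>
     (\<forall>v. (\<forall>i<k. v i \<in> V i) \<and> (\<Sum>i<k. v i) = 0 \<longrightarrow> (\<forall>i<k. v i = 0)) \<and>
     (\<forall>i<k. \<forall>j<k. i \<noteq> j \<longrightarrow> \<not> iso_sub S (V i) (V j)))"

definition no_trivial_subrep :: "(complex^2^2 \<Rightarrow> complex^'n^'n) \<Rightarrow> bool" where
  "no_trivial_subrep S \<longleftrightarrow> (\<forall>v. (\<forall>A\<in>SL2C. S A *v v = v) \<longrightarrow> v = 0)"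

end

theory Submission
  imports Defs
begin


lemma vec22_eq: "(A::'a^2^2) = B \<longleftrightarrow> A$1$1 = B$1$1 \<and> A$1$2 = B$1$2 \<and> A$2$1 = B$2$1 \<and> A$2$2 = B$2$2"
  by (auto simp: vec_eq_iff forall_2)

definition m2 :: "complex \<Rightarrow> complex \<Rightarrow> complex \<Rightarrow> complex \<Rightarrow> complex^2^2" where
  "m2 a b c d = (\<chi> i j. if i = 1 then (if j = 1 then a else b) else (if j = 1 then c else d))"

lemma m2_nth[simp]: "m2 a b c d $ 1 $ 1 = a" "m2 a b c d $ 1 $ 2 = b" "m2 a b c d $ 2 $ 1 = c" "m2 a b c d $ 2 $ 2 = d"
  by (simp_all add: m2_def)

lemma m2_eta: "A = m2 (A$1$1) (A$1$2) (A$2$1) (A$2$2)"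
  by (simp add: vec22_eq)

lemma m2_mult: "m2 a b c d ** m2 a' b' c' d' = m2 (a*a'+b*c') (a*b'+b*d') (c*a'+d*c') (c*b'+d*d')"
  by (simp add: vec22_eq matrix_matrix_mult_def sum_2)

lemma m2_det: "det (m2 a b c d) = a*d - b*c"
  by (simp add: det_2)

lemma m2_one: "mat 1 = m2 1 0 0 1"
  by (simp add: vec22_eq mat_def)

lemma SL2C_mult: "A \<in> SL2C \<Longrightarrow> B \<in> SL2C \<Longrightarrow> A ** B \<in> SL2C"
  by (simp add: SL2C_def det_mul)

lemma SL2C_one: "mat 1 \<in> SL2C" by (simp add: SL2C_def)

lemma SL2C_m2: "m2 a b c d \<in> SL2C \<longleftrightarrow> a*d - b*c = 1"
  by (simp add: SL2C_def m2_det)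

lemma matrix_inv_SL2C:
  assumes "A \<in> SL2C"
  shows "matrix_inv A = m2 (A$2$2) (- A$1$2) (- A$2$1) (A$1$1)"
proof -
  let ?B = "m2 (A$2$2) (- A$1$2) (- A$2$1) (A$1$1)"
  have d: "A$1$1 * A$2$2 - A$1$2 * A$2$1 = 1" using assms by (simp add: SL2C_def det_2)
  have AB: "A ** ?B = mat 1" "?B ** A = mat 1"
  proof -
    obtain a b c e where Ae: "A = m2 a b c e" using m2_eta by blast
    show "A ** ?B = mat 1" "?B ** A = mat 1" using d unfolding Ae
      by (simp_all add: m2_mult m2_one algebra_simps)
  qed
  have "A ** matrix_inv A = mat 1 \<and> matrix_inv A ** A = mat 1"
    unfolding matrix_inv_def by (rule someI[of _ ?B]) (use AB in auto)
  hence "matrix_inv A = (?B ** A) ** matrix_inv A" using AB by simp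
  also have "\<dots> = ?B ** (A ** matrix_inv A)" by (simp add: matrix_mul_assoc)
  also have "\<dots> = ?B" using \<open>A ** matrix_inv A = mat 1 \<and> _\<close> by simp
  finally show ?thesis .
qed


definition ut :: "complex \<Rightarrow> complex^2^2" where "ut t = m2 1 t 0 1"
definition lt :: "complex \<Rightarrow> complex^2^2" where "lt t = m2 1 0 t 1"
definition dg :: "complex \<Rightarrow> complex^2^2" where "dg s = m2 s 0 0 (1/s)"

lemma ut_SL: "ut t \<in> SL2C" by (simp add: ut_def SL2C_m2)
lemma lt_SL: "lt t \<in> SL2C" by (simp add: lt_def SL2C_m2)
lemma dg_SL: "s \<noteq> 0 \<Longrightarrow> dg s \<in> SL2C" by (simp add: dg_def SL2C_m2)
lemma ut_add: "ut (a + b) = ut a ** ut b" by (simp add: ut_def m2_mult add.commute)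
lemma lt_add: "lt (a + b) = lt a ** lt b" by (simp add: lt_def m2_mult add.commute)
lemma ut_0: "ut 0 = mat 1" by (simp add: ut_def m2_one)
lemma lt_0: "lt 0 = mat 1" by (simp add: lt_def m2_one)
lemma dg_inv: "s \<noteq> 0 \<Longrightarrow> dg (1/s) ** dg s = mat 1" "s \<noteq> 0 \<Longrightarrow> dg s ** dg (1/s) = mat 1"
  by (simp_all add: dg_def m2_mult m2_one)

lemma ut_conj: "t \<noteq> 0 \<Longrightarrow> \<exists>D D'. D \<in> SL2C \<and> D' \<in> SL2C \<and> D' ** D = mat 1 \<and> ut t = D ** ut 1 ** D'"
proof -
  assume t: "t \<noteq> 0"
  define s where "s = csqrt t"
  have s2: "s * s = t" using power2_csqrt[of t] by (simp add: s_def power2_eq_square)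
  hence s0: "s \<noteq> 0" using t by auto
  have "ut t = dg s ** ut 1 ** dg (1/s)"
    using s0 by (simp add: ut_def dg_def m2_mult s2[symmetric])
  thus ?thesis using dg_SL dg_inv s0 by (intro exI[of _ "dg s"] exI[of _ "dg (1/s)"]) simp
qed

lemma lt_conj: "t \<noteq> 0 \<Longrightarrow> \<exists>D D'. D \<in> SL2C \<and> D' \<in> SL2C \<and> D' ** D = mat 1 \<and> lt t = D ** lt 1 ** D'"
proof -
  assume t: "t \<noteq> 0"
  define s where "s = csqrt t"
  have s2: "s * s = t" using power2_csqrt[of t] by (simp add: s_def power2_eq_square)
  hence s0: "s \<noteq> 0" using t by auto
  have "lt t = dg (1/s) ** lt 1 ** dg s"
    using s0 by (simp add: lt_def dg_def m2_mult s2[symmetric])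
  thus ?thesis using dg_SL dg_inv s0 by (intro exI[of _ "dg (1/s)"] exI[of _ "dg s"]) simp
qed

lemma SL2C_gen:
  assumes u: "\<And>t. Q (ut t)" and l: "\<And>t. Q (lt t)"
    and m: "\<And>A B. A \<in> SL2C \<Longrightarrow> B \<in> SL2C \<Longrightarrow> Q A \<Longrightarrow> Q B \<Longrightarrow> Q (A ** B)"
    and A: "A \<in> SL2C"
  shows "Q A"
proof -
  have main: "Q B" if B: "B \<in> SL2C" "B$2$1 \<noteq> 0" for B
  proof -
    obtain a b c d where Be: "B = m2 a b c d" using m2_eta by blast
    have c: "c \<noteq> 0" using B(2) Be by simp
    have det: "a*d - b*c = 1" using B(1) Be by (simp add: SL2C_m2)
    have "B = ut ((a-1)/c) ** lt c ** ut ((d-1)/c)"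
      unfolding Be ut_def lt_def using c det
      by (simp add: m2_mult vec22_eq field_simps)
    thus ?thesis using m u l ut_SL lt_SL SL2C_mult by metis
  qed
  show ?thesis
  proof (cases "A$2$1 = 0")
    case False thus ?thesis using main A by blast
  next
    case True
    obtain a b c d where Ae: "A = m2 a b c d" using m2_eta by blast
    have det: "a*d - b*c = 1" using A Ae by (simp add: SL2C_m2)
    hence a: "a \<noteq> 0" using True Ae by auto
    have B: "lt 1 ** A \<in> SL2C" using A lt_SL SL2C_mult by blast
    have "(lt 1 ** A)$2$1 \<noteq> 0" using a True by (simp add: Ae lt_def m2_mult)
    hence QB: "Q (lt 1 ** A)" using main B by blast
    have "A = lt (-1) ** (lt 1 ** A)"
      by (simp add: matrix_mul_assoc lt_add[symmetric] lt_0)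
    thus ?thesis using m[OF lt_SL B l QB, of "-1"] by simp
  qed
qed



locale chs =
  fixes sc :: "complex \<Rightarrow> 'h::ab_group_add \<Rightarrow> 'h" and ip :: "'h \<Rightarrow> 'h \<Rightarrow> complex"
  assumes H: "complex_hilbert_space sc ip"
begin

lemma Hp1: "vector_space sc"
  using H unfolding complex_hilbert_space_def by (elim conjE) assumption
lemma Hp2: "\<forall>x y z. ip x (y + z) = ip x y + ip x z"
  using H unfolding complex_hilbert_space_def by (elim conjE) assumption
lemma Hp3: "\<forall>x y c. ip x (sc c y) = c * ip x y"
  using H unfolding complex_hilbert_space_def by (elim conjE) assumption
lemma Hp4: "\<forall>x y. ip y x = cnj (ip x y)"
  using H unfolding complex_hilbert_space_def by (elim conjE) assumption
lemma Hp5: "\<forall>x. Im (ip x x) = 0 \<and> Re (ip x x) \<ge> 0"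
  using H unfolding complex_hilbert_space_def by (elim conjE) assumption
lemma Hp6: "\<forall>x. ip x x = 0 \<longrightarrow> x = 0"
  using H unfolding complex_hilbert_space_def by (elim conjE) assumption

sublocale vs: vector_space sc by (rule Hp1)

lemma ip_add_right: "ip x (y + z) = ip x y + ip x z"
  using Hp2 by blast
lemma ip_scale_right: "ip x (sc c y) = c * ip x y"
  using Hp3 by blast
lemma ip_sym: "ip y x = cnj (ip x y)"
  using Hp4 by blast
lemma ip_self: "Im (ip x x) = 0" "Re (ip x x) \<ge> 0"
  using Hp5 by blast+
lemma ip_self_zero: "ip x x = 0 \<Longrightarrow> x = 0"
  using Hp6 by blast

lemma ip_add_left: "ip (x + y) z = ip x z + ip y z"
proof -
  have "ip (x + y) z = cnj (ip z (x + y))" by (rule ip_sym)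
  also have "\<dots> = cnj (ip z x) + cnj (ip z y)" by (simp add: ip_add_right)
  finally show ?thesis using ip_sym[of x z] ip_sym[of y z] by simp
qed
lemma ip_scale_left: "ip (sc c x) y = cnj c * ip x y"
proof -
  have "ip (sc c x) y = cnj (ip y (sc c x))" by (rule ip_sym)
  also have "\<dots> = cnj c * cnj (ip y x)" by (simp add: ip_scale_right)
  finally show ?thesis using ip_sym[of x y] by simp
qed
lemma ip_zero_right[simp]: "ip x 0 = 0"
  using ip_add_right[of x 0 0] by simp
lemma ip_zero_left[simp]: "ip 0 x = 0"
  using ip_add_left[of 0 0 x] by simp
lemma ip_minus_right: "ip x (- y) = - ip x y"
proof -
  have "ip x y + ip x (-y) = 0" using ip_add_right[of x y "-y"] by simp
  from minus_unique[OF this] show ?thesis by simp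
qed
lemma ip_minus_left: "ip (- x) y = - ip x y"
proof -
  have "ip x y + ip (-x) y = 0" using ip_add_left[of x "-x" y] by simp
  from minus_unique[OF this] show ?thesis by simp
qed
lemma ip_diff_right: "ip x (y - z) = ip x y - ip x z"
  using ip_add_right[of x y "-z"] ip_minus_right[of x z] by simp
lemma ip_diff_left: "ip (x - y) z = ip x z - ip y z"
  using ip_add_left[of x "-y" z] ip_minus_left[of y z] by simp
lemma ip_sum_right: "ip x (sum f A) = (\<Sum>a\<in>A. ip x (f a))"
  by (induction A rule: infinite_finite_induct) (simp_all add: ip_add_right)
lemma ip_sum_left: "ip (sum f A) x = (\<Sum>a\<in>A. ip (f a) x)"
  by (induction A rule: infinite_finite_induct) (simp_all add: ip_add_left)

lemma ip_self_real: "ip x x = complex_of_real (Re (ip x x))"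
  using ip_self(1)[of x] by (simp add: complex_eq_iff)

lemma ip_self_eq0: "ip x x = 0 \<longleftrightarrow> x = 0"
  using ip_self_zero by auto

lemma orth_zero: "(\<And>w. ip z w = 0) \<Longrightarrow> z = 0"
  using ip_self_zero by blast

lemma dense_orth:
  assumes "dense_in ip D" "\<And>w. w \<in> D \<Longrightarrow> ip z w = 0"
  shows "z = 0"
proof (rule ccontr)
  assume "z \<noteq> 0"
  hence "ip z z \<noteq> 0" using ip_self_zero by blast
  hence r: "Re (ip z z) > 0" using ip_self[of z] by (simp add: complex_eq_iff)
  obtain d where d: "d \<in> D" "hnorm ip (z - d) < sqrt (Re (ip z z))"
    using assms(1) r unfolding dense_in_def by (meson real_sqrt_gt_zero)
  have "ip d z = 0" using assms(2)[OF d(1)] ip_sym[of d z] by simp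
  hence "ip (z - d) (z - d) = ip z z + ip d d"
    using assms(2)[OF d(1)] by (simp add: ip_diff_left ip_diff_right)
  hence "Re (ip (z - d) (z - d)) \<ge> Re (ip z z)" using ip_self(2)[of d] by simp
  hence "hnorm ip (z - d) \<ge> sqrt (Re (ip z z))" unfolding hnorm_def by simp
  with d(2) show False by simp
qed

lemma unitary_adj:
  assumes "unitary_op sc ip T"
  shows "adj ip UNIV T (T u) = u" "T (adj ip UNIV T w) = w"
proof -
  have iso: "\<And>x y. ip (T x) (T y) = ip x y" using assms by (simp add: unitary_op_def)
  show 1: "adj ip UNIV T (T u) = u" for u
    unfolding adj_def
  proof (rule the_equality)
    show "\<forall>w\<in>UNIV. ip u w = ip (T u) (T w)" by (simp add: iso)
    fix u' assume "\<forall>w\<in>UNIV. ip u' w = ip (T u) (T w)"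
    hence "\<And>w. ip (u' - u) w = 0" by (simp add: ip_diff_left iso)
    thus "u' = u" using orth_zero by fastforce
  qed
  have "surj T" using assms by (simp add: unitary_op_def)
  then obtain u where "w = T u" by (metis surjD)
  thus "T (adj ip UNIV T w) = w" using 1 by simp
qed

lemma lin_zero: "linear_on sc D T \<Longrightarrow> 0 \<in> D \<Longrightarrow> T 0 = 0"
  unfolding linear_on_def by (metis add.right_neutral add_left_imp_eq)

lemma lin_sum: "linear_on sc UNIV T \<Longrightarrow> T (sum f A) = (\<Sum>a\<in>A. T (f a))"
  apply (induction A rule: infinite_finite_induct)
    apply (simp_all add: lin_zero)
  by (simp add: linear_on_def)

lemma lin_scale: "linear_on sc UNIV T \<Longrightarrow> T (sc c x) = sc c (T x)"
  by (simp add: linear_on_def)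

definition ONZ :: "('n::finite \<Rightarrow> 'h) \<Rightarrow> bool" where
  "ONZ f \<longleftrightarrow> (\<forall>a b. ip (f a) (f b) = (if a = b \<and> f a \<noteq> 0 then 1 else 0))"

definition expn :: "('n::finite \<Rightarrow> 'h) \<Rightarrow> 'h \<Rightarrow> 'h" where
  "expn f w = (\<Sum>a\<in>UNIV. sc (ip (f a) w) (f a))"

definition lspan :: "('n::finite \<Rightarrow> 'h) \<Rightarrow> 'h set" where
  "lspan v = {w. \<exists>c. w = (\<Sum>b\<in>UNIV. sc (c b) (v b))}"

lemma lspan_add: "x \<in> lspan v \<Longrightarrow> y \<in> lspan v \<Longrightarrow> x + y \<in> lspan v"
  unfolding lspan_def
  apply clarify
  subgoal for c d by (rule exI[of _ "\<lambda>b. c b + d b"]) (simp add: vs.scale_left_distrib sum.distrib)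
  done

lemma lspan_scale: "x \<in> lspan v \<Longrightarrow> sc a x \<in> lspan v"
  unfolding lspan_def
  apply clarify
  subgoal for c by (rule exI[of _ "\<lambda>b. a * c b"]) (simp add: vs.scale_sum_right)
  done

lemma lspan_zero: "0 \<in> lspan v"
  unfolding lspan_def by (rule CollectI, rule exI[of _ "\<lambda>b. 0"]) simp

lemma lspan_sum: "(\<And>a. a \<in> A \<Longrightarrow> g a \<in> lspan v) \<Longrightarrow> sum g A \<in> lspan v"
  by (induction A rule: infinite_finite_induct) (simp_all add: lspan_zero lspan_add)

lemma lspan_diff: assumes "x \<in> lspan v" "y \<in> lspan v" shows "x - y \<in> lspan v"
proof -
  have "x + sc (-1) y \<in> lspan v" using assms lspan_add[of x v "sc (-1) y"] lspan_scale[of y v "-1"] by blast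
  moreover have "x + sc (-1) y = x - y" by simp
  ultimately show ?thesis by simp
qed

lemma lspan_gen: "v b \<in> lspan v"
proof -
  have "(\<Sum>a\<in>UNIV. sc (if a = b then 1 else 0) (v a)) = (\<Sum>a\<in>UNIV. if a = b then v a else 0)"
    by (intro sum.cong) auto
  also have "\<dots> = v b" by simp
  finally have e: "v b = (\<Sum>a\<in>UNIV. sc (if a = b then 1 else 0) (v a))" by simp
  show ?thesis unfolding lspan_def
    by (rule CollectI, rule exI[of _ "\<lambda>a. if a = b then 1 else 0"]) (rule e)
qed

lemma ONZ_ip_expn: "ONZ f \<Longrightarrow> ip (f g) (expn f u) = ip (f g) u"
proof -
  assume o: "ONZ f"
  have "ip (f g) (expn f u) = (\<Sum>a\<in>UNIV. ip (f a) u * ip (f g) (f a))"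
    by (simp add: expn_def ip_sum_right ip_scale_right)
  also have "\<dots> = (\<Sum>a\<in>UNIV. if a = g then (if f g \<noteq> 0 then ip (f g) u else 0) else 0)"
    using o unfolding ONZ_def by (intro sum.cong) auto
  also have "\<dots> = ip (f g) u" by simp
  finally show ?thesis by simp
qed

lemma expn_add: "expn f (x + y) = expn f x + expn f y"
  by (simp add: expn_def ip_add_right vs.scale_left_distrib sum.distrib)
lemma expn_scale: "expn f (sc c x) = sc c (expn f x)"
  by (simp add: expn_def ip_scale_right vs.scale_sum_right)
lemma expn_zero: "expn f 0 = 0" by (simp add: expn_def)
lemma expn_sum: "expn f (sum g A) = (\<Sum>a\<in>A. expn f (g a))"
  by (induction A rule: infinite_finite_induct) (simp_all add: expn_zero expn_add)

lemma expn_lspan: "(\<And>b. expn f (v b) = v b) \<Longrightarrow> x \<in> lspan v \<Longrightarrow> expn f x = x"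
  unfolding lspan_def by (auto simp: expn_sum expn_scale)

lemma expn_upd: "f b = 0 \<Longrightarrow> expn (f(b := e)) u = expn f u + sc (ip e u) e"
proof -
  assume fb: "f b = 0"
  have "expn (f(b := e)) u = sc (ip e u) e + (\<Sum>a\<in>UNIV - {b}. sc (ip (f a) u) (f a))"
    unfolding expn_def by (subst sum.remove[of _ b]) (auto intro!: sum.cong)
  moreover have "expn f u = (\<Sum>a\<in>UNIV - {b}. sc (ip (f a) u) (f a))"
    unfolding expn_def using fb by (subst sum.remove[of _ b]) auto
  ultimately show ?thesis by (simp add: add.commute)
qed

lemma GS_aux:
  fixes v :: "'n::finite \<Rightarrow> 'h"
  shows "finite A \<Longrightarrow> \<exists>f. ONZ f \<and> (\<forall>a. f a \<in> lspan v) \<and> (\<forall>a. a \<notin> A \<longrightarrow> f a = 0) \<and> (\<forall>b\<in>A. expn f (v b) = v b)"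
proof (induction A rule: finite_induct)
  case empty
  show ?case by (rule exI[of _ "\<lambda>_. 0"]) (simp add: ONZ_def lspan_zero)
next
  case (insert b A)
  then obtain f where o: "ONZ f" and sp: "\<forall>a. f a \<in> lspan v" and z: "\<forall>a. a \<notin> A \<longrightarrow> f a = 0"
    and ex: "\<forall>b\<in>A. expn f (v b) = v b" by blast
  have fb: "f b = 0" using z insert by blast
  define w where "w = v b - expn f (v b)"
  have wsp: "w \<in> lspan v" unfolding w_def expn_def
    by (intro lspan_diff lspan_gen lspan_sum lspan_scale sp[rule_format])
  have worth: "ip (f a) w = 0" for a using ONZ_ip_expn[OF o] by (simp add: w_def ip_diff_right)
  show ?case
  proof (cases "w = 0")
    case True
    thus ?thesis using o sp z ex by (intro exI[of _ f]) (auto simp: w_def)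
  next
    case False
    define r where "r = sqrt (Re (ip w w))"
    have "ip w w \<noteq> 0" using False ip_self_zero by blast
    hence rp: "Re (ip w w) > 0" using ip_self[of w] by (simp add: complex_eq_iff)
    hence r0: "r > 0" by (simp add: r_def)
    have wwr: "ip w w = complex_of_real (r^2)" using ip_self_real[of w] rp by (simp add: r_def)
    define e where "e = sc (complex_of_real (1/r)) w"
    have ee: "ip e e = 1" using r0 by (simp add: e_def ip_scale_left ip_scale_right wwr power2_eq_square)
    hence e0: "e \<noteq> 0" by auto
    have fe: "ip (f a) e = 0" for a by (simp add: e_def ip_scale_right worth)
    have ef: "ip e (f a) = 0" for a using fe[of a] ip_sym[of "f a" e] by simp
    define f' where "f' = f(b := e)"
    have o': "ONZ f'" unfolding ONZ_def f'_def
    proof (intro allI)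
      fix a c
      show "ip ((f(b := e)) a) ((f(b := e)) c) = (if a = c \<and> (f(b := e)) a \<noteq> 0 then 1 else 0)"
        using o ee e0 fe ef unfolding ONZ_def by (cases "a = b"; cases "c = b") auto
    qed
    have sp': "\<forall>a. f' a \<in> lspan v" using sp wsp by (simp add: f'_def e_def lspan_scale)
    have z': "\<forall>a. a \<notin> insert b A \<longrightarrow> f' a = 0" using z by (simp add: f'_def)
    have ex': "\<forall>c\<in>insert b A. expn f' (v c) = v c"
    proof
      fix c assume c: "c \<in> insert b A"
      show "expn f' (v c) = v c"
      proof (cases "c = b")
        case True
        have "ip e (v b) = ip e w + ip e (expn f (v b))" by (simp add: w_def ip_diff_right)
        also have "ip e (expn f (v b)) = 0"
          by (simp add: expn_def ip_sum_right ip_scale_right ef)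
        also have "ip e w = complex_of_real r" using r0
          by (simp add: e_def ip_scale_left wwr power2_eq_square)
        finally have "ip e (v b) = complex_of_real r" by simp
        hence "sc (ip e (v b)) e = w" using r0 by (simp add: e_def)
        thus ?thesis using True by (simp add: f'_def expn_upd[of f b, OF fb] w_def)
      next
        case False
        hence cA: "c \<in> A" using c by simp
        have "ip e (v c) = ip e (expn f (v c))" using ex cA by simp
        also have "\<dots> = 0" by (simp add: expn_def ip_sum_right ip_scale_right ef)
        finally show ?thesis using ex cA by (simp add: f'_def expn_upd[of f b, OF fb])
      qed
    qed
    show ?thesis using o' sp' z' ex' by blast
  qed
qed

lemma GS:
  fixes v :: "'n::finite \<Rightarrow> 'h"
  shows "\<exists>f :: 'n \<Rightarrow> 'h. ONZ f \<and> (\<forall>a. f a \<in> lspan v) \<and> (\<forall>b. expn f (v b) = v b)"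
proof -
  have "finite (UNIV :: 'n set)" by simp
  from GS_aux[OF this, of v] show ?thesis by simp
qed

end


lemma mat_add_rdistrib: "((A::'a::semiring_1^'n::finite^'m) + B) ** C = A ** C + B ** C"
  by (simp add: matrix_matrix_mult_def vec_eq_iff sum.distrib distrib_right)

lemma trace_lin:
  fixes M :: "nat \<Rightarrow> complex^'n::finite^'n"
  shows "trace ((\<Sum>k\<in>K. c k *\<^sub>R M k) ** B) = (\<Sum>k\<in>K. complex_of_real (c k) * trace (M k ** B))"
proof (induction K rule: infinite_finite_induct)
  case (infinite K) then show ?case by (simp add: trace_def matrix_matrix_mult_def)
next
  case empty then show ?case by (simp add: trace_def matrix_matrix_mult_def)
next
  case (insert x F)
  have "trace ((c x *\<^sub>R M x) ** B) = complex_of_real (c x) * trace (M x ** B)"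
    unfolding trace_def matrix_matrix_mult_def
    by (simp add: sum_distrib_left) (simp add: scaleR_conv_of_real mult.assoc)
  then show ?case using insert by (simp add: mat_add_rdistrib trace_add)
qed

lemma trace_trick:
  fixes R :: "complex \<Rightarrow> complex^'n::finite^'n"
  assumes add: "\<And>a b. R (a + b) = R a ** R b"
    and cj: "\<And>t. t \<noteq> 0 \<Longrightarrow> trace (R t) = trace (R 1)"
  shows "trace (R 1) = trace (R 0)"
proof (rule ccontr)
  define \<tau> where "\<tau> = trace (R 1)"
  define \<mu> where "\<mu> = trace (R 0)"
  assume ne: "trace (R 1) \<noteq> trace (R 0)"
  hence ne': "\<mu> \<noteq> \<tau>" by (simp add: \<tau>_def \<mu>_def)
  have tr: "trace (R a ** R (- b)) = (if a = b then \<mu> else \<tau>)" for a b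
  proof -
    have "R a ** R (- b) = R (a - b)" using add[of a "-b"] by simp
    thus ?thesis using cj[of "a - b"] by (simp add: \<tau>_def \<mu>_def)
  qed
  have inj: "inj R"
  proof (rule injI)
    fix a b assume "R a = R b"
    hence "trace (R a ** R (- b)) = trace (R b ** R (- b))" by simp
    thus "a = b" using tr[of a b] tr[of b b] ne' by (auto split: if_splits)
  qed
  have key: "\<mu> = \<tau> * (1 - of_nat N)" if N: "N > DIM(complex^'n^'n)" for N :: nat
  proof -
    define K where "K = {1..N}"
    define X where "X = (\<lambda>k. R (of_nat k)) ` K"
    have injK: "inj_on (\<lambda>k. R (of_nat k)) K"
    proof (rule inj_onI)
      fix k k' assume "R (of_nat k) = R (of_nat k')"
      hence "(of_nat k :: complex) = of_nat k'" using inj by (simp add: inj_eq)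
      thus "k = k'" by simp
    qed
    have cX: "card X = N" unfolding X_def using card_image[OF injK] by (simp add: K_def)
    have "dependent X" by (rule dependent_biggerset) (use cX N in simp)
    then obtain T u where T: "finite T" "T \<subseteq> X" "(\<Sum>v\<in>T. u v *\<^sub>R v) = 0" "\<exists>v\<in>T. u v \<noteq> 0"
      unfolding real_vector.dependent_explicit by blast
    define c where "c k = (if R (of_nat k) \<in> T then u (R (of_nat k)) else 0)" for k
    have "(\<Sum>k\<in>K. c k *\<^sub>R R (of_nat k)) = (\<Sum>k\<in>{k\<in>K. R (of_nat k) \<in> T}. u (R (of_nat k)) *\<^sub>R R (of_nat k))"
      unfolding c_def by (rule sum.mono_neutral_cong_right) (auto simp: K_def)
    also have "\<dots> = (\<Sum>v\<in>(\<lambda>k. R (of_nat k)) ` {k\<in>K. R (of_nat k) \<in> T}. u v *\<^sub>R v)"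
      using sum.reindex[OF inj_on_subset[OF injK, of "{k\<in>K. R (of_nat k) \<in> T}"], of "\<lambda>v. u v *\<^sub>R v"]
      by auto
    also have "(\<lambda>k. R (of_nat k)) ` {k\<in>K. R (of_nat k) \<in> T} = T"
      using T(2) unfolding X_def by auto
    finally have Z: "(\<Sum>k\<in>K. c k *\<^sub>R R (of_nat k)) = 0" using T(3) by simp
    define C where "C = (\<Sum>k\<in>K. complex_of_real (c k))"
    have eq: "complex_of_real (c l) * (\<mu> - \<tau>) = - \<tau> * C" if l: "l \<in> K" for l
    proof -
      have "0 = trace ((\<Sum>k\<in>K. c k *\<^sub>R R (of_nat k)) ** R (- of_nat l))" using Z
        by (simp add: trace_def matrix_matrix_mult_def)
      also have "\<dots> = (\<Sum>k\<in>K. complex_of_real (c k) * (if k = l then \<mu> else \<tau>))"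
        by (simp add: trace_lin tr)
      also have "\<dots> = (\<Sum>k\<in>K. complex_of_real (c k) * \<tau> + (if k = l then complex_of_real (c k) * (\<mu> - \<tau>) else 0))"
        by (intro sum.cong) (auto simp: algebra_simps)
      also have "\<dots> = C * \<tau> + complex_of_real (c l) * (\<mu> - \<tau>)"
        using l by (simp add: sum.distrib C_def sum_distrib_right K_def)
      finally show ?thesis by (simp add: algebra_simps)
    qed
    obtain v0 where v0: "v0 \<in> T" "u v0 \<noteq> 0" using T(4) by blast
    then obtain k0 where k0: "k0 \<in> K" "v0 = R (of_nat k0)" using T(2) unfolding X_def by auto
    have ck0: "c k0 \<noteq> 0" using v0 k0 by (simp add: c_def)
    have allc: "c k = c k0" if "k \<in> K" for k
    proof -
      have "complex_of_real (c k) * (\<mu> - \<tau>) = complex_of_real (c k0) * (\<mu> - \<tau>)"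
        using eq[OF that] eq[OF k0(1)] by simp
      thus ?thesis using ne' by simp
    qed
    have "C = of_nat N * complex_of_real (c k0)"
      unfolding C_def using allc by (simp add: K_def)
    hence "complex_of_real (c k0) * (\<mu> - \<tau>) = complex_of_real (c k0) * (- \<tau> * of_nat N)"
      using eq[OF k0(1)] by (simp add: algebra_simps)
    hence "\<mu> - \<tau> = - \<tau> * of_nat N" using ck0 by (metis mult_left_cancel of_real_eq_0_iff)
    thus ?thesis by (simp add: algebra_simps)
  qed
  have "\<tau> * (1 - of_nat (DIM(complex^'n^'n) + 1)) = \<tau> * (1 - of_nat (DIM(complex^'n^'n) + 2))"
    using key[of "DIM(complex^'n^'n) + 1"] key[of "DIM(complex^'n^'n) + 2"] by simp
  hence "\<tau> = 0" by (simp add: algebra_simps)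
  moreover have "\<mu> = 0" using key[of "DIM(complex^'n^'n) + 1"] \<open>\<tau> = 0\<close> by simp
  ultimately show False using ne' by simp
qed



context chs begin

lemma lspan_P:
  assumes "linear_on sc UNIV T" "\<And>b. T (v b) \<in> lspan v" "x \<in> lspan v"
  shows "T x \<in> lspan v"
proof -
  obtain c where x: "x = (\<Sum>b\<in>UNIV. sc (c b) (v b))" using assms(3) unfolding lspan_def by blast
  have "T x = (\<Sum>b\<in>UNIV. sc (c b) (T (v b)))" unfolding x using assms(1) by (simp add: lin_sum lin_scale)
  thus ?thesis by (auto intro!: lspan_sum lspan_scale assms(2))
qed

lemma core:
  fixes P :: "complex^2^2 \<Rightarrow> 'h \<Rightarrow> 'h" and v :: "'n::finite \<Rightarrow> 'h"
  assumes Plin: "\<And>A. A \<in> SL2C \<Longrightarrow> linear_on sc UNIV (P A)"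
    and Piso: "\<And>A x y. A \<in> SL2C \<Longrightarrow> ip (P A x) (P A y) = ip x y"
    and Pmult: "\<And>A B. A \<in> SL2C \<Longrightarrow> B \<in> SL2C \<Longrightarrow> P (A ** B) = P A \<circ> P B"
    and P1: "P (mat 1) = id"
    and Pinv: "\<And>A b. A \<in> SL2C \<Longrightarrow> P A (v b) \<in> lspan v"
    and A: "A \<in> SL2C"
  shows "P A (v b) = v b"
proof -
  obtain f :: "'n \<Rightarrow> 'h" where o: "ONZ f" and fsp: "\<forall>a. f a \<in> lspan v" and fex: "\<forall>b. expn f (v b) = v b"
    using GS by blast
  have Pf: "expn f (P B (f a)) = P B (f a)" if "B \<in> SL2C" for B a
    using expn_lspan[of f v] fex lspan_P[OF Plin[OF that] Pinv[OF that] fsp[rule_format]] by blast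
  define R where "R B = (\<chi> a b. ip (f a) (P B (f b)))" for B :: "complex^2^2"
  have Rexp: "P B (f b) = (\<Sum>a\<in>UNIV. sc (R B $ a $ b) (f a))" if "B \<in> SL2C" for B b
    using Pf[OF that, of b] by (simp add: R_def expn_def)
  have Rmult: "R (B ** C) = R B ** R C" if B: "B \<in> SL2C" and C: "C \<in> SL2C" for B C
  proof -
    have "R (B ** C) $ a $ b = (R B ** R C) $ a $ b" for a b
    proof -
      have "R (B ** C) $ a $ b = ip (f a) (P B (P C (f b)))" by (simp add: R_def Pmult[OF B C])
      also have "\<dots> = ip (f a) (P B (\<Sum>c\<in>UNIV. sc (R C $ c $ b) (f c)))" by (simp add: Rexp[OF C])
      also have "\<dots> = (\<Sum>c\<in>UNIV. R C $ c $ b * ip (f a) (P B (f c)))"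
        using Plin[OF B] by (simp add: lin_sum lin_scale ip_sum_right ip_scale_right)
      also have "\<dots> = (R B ** R C) $ a $ b"
        by (simp add: matrix_matrix_mult_def R_def mult.commute)
      finally show ?thesis .
    qed
    thus ?thesis by (simp add: vec_eq_iff)
  qed
  have fam: "trace (R (E t)) = trace (R (mat 1))"
    if Eadd: "\<And>a b. E (a + b) = E a ** E b" and ESL: "\<And>t. E t \<in> SL2C" and E0: "E 0 = mat 1"
      and Ecj: "\<And>t. t \<noteq> 0 \<Longrightarrow> \<exists>D D'. D \<in> SL2C \<and> D' \<in> SL2C \<and> D' ** D = mat 1 \<and> E t = D ** E 1 ** D'"
    for E :: "complex \<Rightarrow> complex^2^2" and t
  proof -
    have cj: "trace (R (E t)) = trace (R (E 1))" if t: "t \<noteq> 0" for t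
    proof -
      obtain D D' where D: "D \<in> SL2C" "D' \<in> SL2C" "D' ** D = mat 1" "E t = D ** E 1 ** D'"
        using Ecj[OF t] by blast
      have "R (E t) = R (D ** E 1 ** D')" using D(4) by simp
      also have "\<dots> = R D ** R (E 1) ** R D'"
        using D(1,2) ESL[of 1] SL2C_mult by (simp add: Rmult)
      finally have "trace (R (E t)) = trace (R D ** (R (E 1) ** R D'))" by (simp add: matrix_mul_assoc)
      also have "\<dots> = trace ((R (E 1) ** R D') ** R D)" by (rule trace_mul_sym)
      also have "(R (E 1) ** R D') ** R D = R (E 1) ** R (D' ** D)"
        using D(1,2) by (simp add: Rmult matrix_mul_assoc)
      also have "R (E 1) ** R (D' ** D) = R (E 1 ** mat 1)"
        using D(3) Rmult[OF ESL[of 1] SL2C_one] by simp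
      finally show ?thesis by simp
    qed
    have h1: "R (E (a + b)) = R (E a) ** R (E b)" for a b using Eadd Rmult ESL by simp
    have "trace (R (E 1)) = trace (R (E 0))"
      using trace_trick[of "\<lambda>t. R (E t)", OF h1 cj] by simp
    thus ?thesis using cj[of t] E0 by (cases "t = 0") auto
  qed
  have fixf: "P B (f a) = f a" if B: "B \<in> SL2C" and tB: "trace (R B) = trace (R (mat 1))" for B a
  proof -
    define d where "d a = Re (ip (f a) (f a)) - Re (ip (f a) (P B (f a)))" for a
    have dd: "Re (ip (P B (f a) - f a) (P B (f a) - f a)) = 2 * d a" for a
    proof -
      have "ip (P B (f a) - f a) (P B (f a) - f a) = 2 * ip (f a) (f a) - ip (P B (f a)) (f a) - ip (f a) (P B (f a))"
        by (simp add: ip_diff_left ip_diff_right Piso[OF B])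
      moreover have "Re (ip (P B (f a)) (f a)) = Re (ip (f a) (P B (f a)))"
        using ip_sym[of "f a" "P B (f a)"] by simp
      ultimately show ?thesis by (simp add: d_def)
    qed
    have dnn: "d a \<ge> 0" for a using dd[of a] ip_self(2)[of "P B (f a) - f a"] by simp
    have "(\<Sum>a\<in>UNIV. d a) = Re (trace (R (mat 1))) - Re (trace (R B))"
      by (simp add: d_def trace_def R_def P1 sum_subtractf)
    hence "(\<Sum>a\<in>UNIV. d a) = 0" using tB by simp
    hence "d a = 0" using dnn sum_nonneg_eq_0_iff[of UNIV d] by simp
    hence "Re (ip (P B (f a) - f a) (P B (f a) - f a)) = 0" using dd by simp
    hence "ip (P B (f a) - f a) (P B (f a) - f a) = 0"
      using ip_self(1)[of "P B (f a) - f a"] by (simp add: complex_eq_iff)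
    thus ?thesis using ip_self_zero by fastforce
  qed
  have fixv: "P B (v b) = v b" if B: "B \<in> SL2C" and ff: "\<And>a. P B (f a) = f a" for B b
  proof -
    have "P B (v b) = P B (expn f (v b))" using fex by simp
    also have "\<dots> = expn f (v b)" using Plin[OF B] ff by (simp add: expn_def lin_sum lin_scale)
    finally show ?thesis using fex by simp
  qed
  have "\<forall>b. P A (v b) = v b"
  proof (rule SL2C_gen[OF _ _ _ A])
    show "\<forall>b. P (ut t) (v b) = v b" for t
      using fixv[OF ut_SL] fixf[OF ut_SL] fam[of ut, OF ut_add ut_SL ut_0 ut_conj] by blast
    show "\<forall>b. P (lt t) (v b) = v b" for t
      using fixv[OF lt_SL] fixf[OF lt_SL] fam[of lt, OF lt_add lt_SL lt_0 lt_conj] by blast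
    show "\<forall>b. P (B ** C) (v b) = v b" if "B \<in> SL2C" "C \<in> SL2C" "\<forall>b. P B (v b) = v b" "\<forall>b. P C (v b) = v b" for B C
      using that by (simp add: Pmult)
  qed
  thus ?thesis by blast
qed

end


lemma herm_0: "herm 0 = 0"
  by (simp add: herm_def vec_eq_iff complex_eq_iff)

lemma lorentz_0: "lorentz A 0 = 0"
  by (simp add: lorentz_def herm_0 Let_def vec_eq_iff)

lemma minv_SL: assumes "B \<in> SL2C" shows "matrix_inv B \<in> SL2C" "matrix_inv (matrix_inv B) = B"
proof -
  obtain a b c d where Be: "B = m2 a b c d" using m2_eta by blast
  have det: "a*d - b*c = 1" using assms Be by (simp add: SL2C_m2)
  have mi: "matrix_inv B = m2 d (-b) (-c) a" using matrix_inv_SL2C[OF assms] Be by simp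
  show s: "matrix_inv B \<in> SL2C" using det by (simp add: mi SL2C_m2 algebra_simps)
  have "matrix_inv (matrix_inv B) = m2 a b c d" using matrix_inv_SL2C[OF s] unfolding mi by simp
  thus "matrix_inv (matrix_inv B) = B" using Be by simp
qed

lemma minv_1: "matrix_inv (mat 1 :: complex^2^2) = mat 1"
  using matrix_inv_SL2C[OF SL2C_one] by (simp add: m2_one)

context chs begin

lemma sum_delta_sc: "(\<Sum>b\<in>UNIV. sc (mat 1 $ a $ b) (y b)) = (y a :: 'h)"
proof -
  have "(\<Sum>b\<in>UNIV. sc (mat 1 $ a $ b) (y b)) = (\<Sum>b\<in>UNIV. if b = a then y b else 0)"
    by (intro sum.cong) (auto simp: mat_def)
  also have "\<dots> = y a" by simp
  finally show ?thesis .
qed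

lemma adjD:
  assumes "dense_in ip D" "v \<in> adj_dom ip D T" "w \<in> D"
  shows "ip (adj ip D T v) w = ip v (T w)"
proof -
  obtain u where u: "\<forall>w\<in>D. ip u w = ip v (T w)" using assms(2) unfolding adj_dom_def by blast
  have "adj ip D T v = u" unfolding adj_def
  proof (rule the_equality)
    show "\<forall>w\<in>D. ip u w = ip v (T w)" by (rule u)
    fix u' assume "\<forall>w\<in>D. ip u' w = ip v (T w)"
    hence "\<And>w. w \<in> D \<Longrightarrow> ip (u' - u) w = 0" using u by (simp add: ip_diff_left)
    thus "u' = u" using dense_orth[OF assms(1)] by fastforce
  qed
  thus ?thesis using u assms(3) by simp
qed

lemma adjD_eq:
  assumes "dense_in ip D" "\<forall>w\<in>D. ip u w = ip v (T w)"
  shows "adj ip D T v = u"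
proof -
  have "v \<in> adj_dom ip D T" using assms(2) unfolding adj_dom_def by blast
  hence "\<And>w. w \<in> D \<Longrightarrow> ip (adj ip D T v - u) w = 0"
    using adjD[OF assms(1)] assms(2) by (simp add: ip_diff_left)
  thus ?thesis using dense_orth[OF assms(1)] by fastforce
qed

end

theorem theorem3:
  fixes sc :: "complex \<Rightarrow> 'h::ab_group_add \<Rightarrow> 'h"
    and ip :: "'h \<Rightarrow> 'h \<Rightarrow> complex"
    and D :: "'h set"
    and U :: "(real^4) \<times> (complex^2^2) \<Rightarrow> 'h \<Rightarrow> 'h"
    and S :: "complex^2^2 \<Rightarrow> complex^'n::finite^'n"
    and \<psi> :: "'n \<Rightarrow> real^4 \<Rightarrow> 'h \<Rightarrow> 'h"
  assumes H: "complex_hilbert_space sc ip"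
    and D_sub: "is_subspace sc D"
    and D_dense: "dense_in ip D"
    and U_rep: "unitary_rep_poincare sc ip U"
    and S_rep: "rep_SL2C S"
    and S_mf: "multiplicity_free S"
    and S_nt: "no_trivial_subrep S"
    and \<psi>_lin: "\<And>\<alpha> x. linear_on sc D (\<psi> \<alpha> x)"
    and A1: "\<And>g. g \<in> poincare \<Longrightarrow> U g ` D \<subseteq> D \<and> adj ip UNIV (U g) ` D \<subseteq> D"
    and A2: "\<And>\<alpha> x. \<psi> \<alpha> x ` D \<subseteq> D \<and> D \<subseteq> adj_dom ip D (\<psi> \<alpha> x) \<and> adj ip D (\<psi> \<alpha> x) ` D \<subseteq> D"
    and A3: "\<And>a A x \<alpha> v. (a, A) \<in> poincare \<Longrightarrow> v \<in> D \<Longrightarrow>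
               U (a, A) (\<psi> \<alpha> x (adj ip UNIV (U (a, A)) v)) =
               (\<Sum>\<beta>\<in>UNIV. sc (S (matrix_inv A) $ \<alpha> $ \<beta>) (\<psi> \<beta> (lorentz A x + a) v))"
    and A4: "\<Omega> \<in> D" "\<Omega> \<noteq> 0" "\<And>g. g \<in> poincare \<Longrightarrow> U g \<Omega> = \<Omega>"
  shows "\<forall>x \<alpha>. \<psi> \<alpha> x \<Omega> = 0 \<and> adj ip D (\<psi> \<alpha> x) \<Omega> = 0"
proof -
  interpret chs sc ip by unfold_locales (rule H)
  have Uu: "unitary_op sc ip (U g)" if "g \<in> poincare" for g
    using U_rep that unfolding unitary_rep_poincare_def by blast
  have Ulin: "linear_on sc UNIV (U g)" if "g \<in> poincare" for g
    using Uu[OF that] by (simp add: unitary_op_def)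
  have Uiso: "ip (U g x) (U g y) = ip x y" if "g \<in> poincare" for g x y
    using Uu[OF that] by (simp add: unitary_op_def)
  have U0: "U g 0 = 0" if "g \<in> poincare" for g using lin_zero[OF Ulin[OF that]] by simp
  have Uadj1: "adj ip UNIV (U g) (U g u) = u" if "g \<in> poincare" for g u using unitary_adj(1)[OF Uu[OF that]] .
  have Uadj2: "U g (adj ip UNIV (U g) w) = w" if "g \<in> poincare" for g w using unitary_adj(2)[OF Uu[OF that]] .
  have UadjD: "adj ip UNIV (U g) w \<in> D" if "g \<in> poincare" "w \<in> D" for g w using A1[OF that(1)] that(2) by blast
  have Omadj: "adj ip UNIV (U g) \<Omega> = \<Omega>" if "g \<in> poincare" for g
    using Uadj1[OF that, of \<Omega>] A4(3)[OF that] by simp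
  have pc0: "(0, A) \<in> poincare" if "A \<in> SL2C" for A :: "complex^2^2" using that by (simp add: poincare_def)
  have pcx: "(x, mat 1) \<in> poincare" for x :: "real^4" by (simp add: poincare_def SL2C_one)
  define P where "P A = U (0, A)" for A
  have Plin: "linear_on sc UNIV (P A)" if "A \<in> SL2C" for A using Ulin[OF pc0[OF that]] by (simp add: P_def)
  have Piso: "ip (P A x) (P A y) = ip x y" if "A \<in> SL2C" for A x y using Uiso[OF pc0[OF that]] by (simp add: P_def)
  have Pmult: "P (A ** B) = P A \<circ> P B" if "A \<in> SL2C" "B \<in> SL2C" for A B
  proof -
    have "pmult (0, A) (0, B) = (0, A ** B)" by (simp add: pmult_def lorentz_0)
    moreover have "U (pmult (0, A) (0, B)) = U (0, A) \<circ> U (0, B)"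
      using U_rep pc0[OF that(1)] pc0[OF that(2)] unfolding unitary_rep_poincare_def by blast
    ultimately show ?thesis by (simp add: P_def)
  qed
  have P1: "P (mat 1) = id" using U_rep unfolding unitary_rep_poincare_def P_def by blast
  have SB: "\<exists>A\<in>SL2C. matrix_inv A = B" if "B \<in> SL2C" for B using minv_SL[OF that] by blast
  define v where "v b = \<psi> b 0 \<Omega>" for b
  have covv: "P A (v a) = (\<Sum>b\<in>UNIV. sc (S (matrix_inv A) $ a $ b) (v b))" if "A \<in> SL2C" for A a
    using A3[OF pc0[OF that] A4(1), of a 0] Omadj[OF pc0[OF that]] by (simp add: P_def v_def lorentz_0)
  have vinv: "P A (v b) \<in> lspan v" if "A \<in> SL2C" for A b
    unfolding covv[OF that] by (intro lspan_sum lspan_scale lspan_gen)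
  have fixv: "P A (v a) = v a" if "A \<in> SL2C" for A a
    by (rule core[OF Plin Piso Pmult P1 vinv that])
  have v0: "v a = 0" for a
  proof -
    define c where "c w = (\<chi> b. ip w (v b))" for w
    have "S B *v c w = c w" if B: "B \<in> SL2C" for B w
    proof -
      obtain A where A: "A \<in> SL2C" "matrix_inv A = B" using SB[OF B] by blast
      have "ip w (v a) = (\<Sum>b\<in>UNIV. S B $ a $ b * ip w (v b))" for a
      proof -
        have e: "(\<Sum>b\<in>UNIV. sc (S B $ a $ b) (v b)) = v a"
          using trans[OF covv[OF A(1), of a, symmetric] fixv[OF A(1), of a]] by (simp only: A(2))
        have "ip w (v a) = ip w (\<Sum>b\<in>UNIV. sc (S B $ a $ b) (v b))" by (simp only: e)
        thus ?thesis by (simp add: ip_sum_right ip_scale_right)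
      qed
      note r = this[symmetric]
      show ?thesis by (simp add: c_def vec_eq_iff matrix_vector_mult_def r)
    qed
    hence "c w = 0" for w using S_nt unfolding no_trivial_subrep_def by blast
    hence "c (v a) $ a = 0" by simp
    hence "ip (v a) (v a) = 0" unfolding c_def by simp
    thus ?thesis using ip_self_zero by blast
  qed
  define u where "u b = adj ip D (\<psi> b 0) \<Omega>" for b
  have uD: "ip (u a) w = ip \<Omega> (\<psi> a 0 w)" if "w \<in> D" for a w
  proof -
    have "\<Omega> \<in> adj_dom ip D (\<psi> a 0)" using A2 A4(1) by blast
    from adjD[OF D_dense this that] show ?thesis by (simp add: u_def)
  qed
  have covu: "P A (u a) = (\<Sum>b\<in>UNIV. sc (cnj (S (matrix_inv A) $ a $ b)) (u b))" if A: "A \<in> SL2C" for A a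
  proof -
    let ?G = "U (0, A)"
    have "ip (P A (u a) - (\<Sum>b\<in>UNIV. sc (cnj (S (matrix_inv A) $ a $ b)) (u b))) w = 0" if w: "w \<in> D" for w
    proof -
      have wD: "adj ip UNIV ?G w \<in> D" using UadjD[OF pc0[OF A] w] .
      have "ip (P A (u a)) w = ip (?G (u a)) (?G (adj ip UNIV ?G w))" by (simp add: P_def Uadj2[OF pc0[OF A]])
      also have "\<dots> = ip (u a) (adj ip UNIV ?G w)" by (rule Uiso[OF pc0[OF A]])
      also have "\<dots> = ip \<Omega> (\<psi> a 0 (adj ip UNIV ?G w))" by (rule uD[OF wD])
      also have "\<dots> = ip (?G \<Omega>) (?G (\<psi> a 0 (adj ip UNIV ?G w)))" by (rule Uiso[OF pc0[OF A], symmetric])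
      also have "\<dots> = ip \<Omega> (\<Sum>b\<in>UNIV. sc (S (matrix_inv A) $ a $ b) (\<psi> b 0 w))"
        using A3[OF pc0[OF A] w, of a 0] A4(3)[OF pc0[OF A]] by (simp add: lorentz_0)
      also have "\<dots> = (\<Sum>b\<in>UNIV. S (matrix_inv A) $ a $ b * ip (u b) w)"
        by (simp add: ip_sum_right ip_scale_right uD[OF w])
      also have "\<dots> = ip (\<Sum>b\<in>UNIV. sc (cnj (S (matrix_inv A) $ a $ b)) (u b)) w"
        by (simp add: ip_sum_left ip_scale_left)
      finally show ?thesis by (simp add: ip_diff_left)
    qed
    hence "P A (u a) - (\<Sum>b\<in>UNIV. sc (cnj (S (matrix_inv A) $ a $ b)) (u b)) = 0"
      by (rule dense_orth[OF D_dense])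
    thus ?thesis by simp
  qed
  have uinv: "P A (u b) \<in> lspan u" if "A \<in> SL2C" for A b
    unfolding covu[OF that] by (intro lspan_sum lspan_scale lspan_gen)
  have fixu: "P A (u a) = u a" if "A \<in> SL2C" for A a
    by (rule core[OF Plin Piso Pmult P1 uinv that])
  have u0: "u a = 0" for a
  proof -
    define c where "c w = (\<chi> b. ip (u b) w)" for w
    have "S B *v c w = c w" if B: "B \<in> SL2C" for B w
    proof -
      obtain A where A: "A \<in> SL2C" "matrix_inv A = B" using SB[OF B] by blast
      have "ip (u a) w = (\<Sum>b\<in>UNIV. S B $ a $ b * ip (u b) w)" for a
      proof -
        have e: "(\<Sum>b\<in>UNIV. sc (cnj (S B $ a $ b)) (u b)) = u a"
          using trans[OF covu[OF A(1), of a, symmetric] fixu[OF A(1), of a]] by (simp only: A(2))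
        have "ip (u a) w = ip (\<Sum>b\<in>UNIV. sc (cnj (S B $ a $ b)) (u b)) w" by (simp only: e)
        thus ?thesis by (simp add: ip_sum_left ip_scale_left)
      qed
      note r = this[symmetric]
      show ?thesis by (simp add: c_def vec_eq_iff matrix_vector_mult_def r)
    qed
    hence "c w = 0" for w using S_nt unfolding no_trivial_subrep_def by blast
    hence "c (u a) $ a = 0" by simp
    hence "ip (u a) (u a) = 0" unfolding c_def by simp
    thus ?thesis using ip_self_zero by blast
  qed
  have S1: "S (mat 1) = mat 1" using S_rep by (simp add: rep_SL2C_def)
  have transl: "U (x, mat 1) (\<psi> a 0 (adj ip UNIV (U (x, mat 1)) w)) = \<psi> a x w" if "w \<in> D" for x a w
    using A3[OF pcx[of x] that, of a 0] by (simp add: minv_1 S1 lorentz_0 sum_delta_sc)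
  show ?thesis
  proof (intro allI conjI)
    fix x a
    show "\<psi> a x \<Omega> = 0"
      using transl[OF A4(1), of x a] Omadj[OF pcx] v0[of a] U0[OF pcx] by (simp add: v_def)
    show "adj ip D (\<psi> a x) \<Omega> = 0"
    proof (rule adjD_eq[OF D_dense], intro ballI)
      fix w assume w: "w \<in> D"
      let ?G = "U (x, mat 1)"
      have "ip \<Omega> (\<psi> a x w) = ip (?G \<Omega>) (?G (\<psi> a 0 (adj ip UNIV ?G w)))"
        using transl[OF w] A4(3)[OF pcx] by simp
      also have "\<dots> = ip \<Omega> (\<psi> a 0 (adj ip UNIV ?G w))" by (rule Uiso[OF pcx])
      also have "\<dots> = ip (u a) (adj ip UNIV ?G w)" by (rule uD[OF UadjD[OF pcx w], symmetric])
      also have "\<dots> = 0" by (simp add: u0)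
      finally show "ip 0 w = ip \<Omega> (\<psi> a x w)" by simp
    qed
  qed
qed


end
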